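(* For every $n\ge1$ and every $\nu\in\{0,\dots,n-1\}$, $$\int_{S_1}t^\nu\,\Psi_{2n}(t)\,s_2(t)\,dt=0\qquad\text{and}\qquad \int_{S_1}t^\nu\,\Psi_{2n+1}(t)\,s_2(t)\,dt=0.$$
   Context: Fix real numbers $0<\alpha<\infty$ and $0<a<b<\infty$, and let $\omega=e^{2\pi i/3}$. Let $S_0=\bigcup_{k=0}^{2}\omega^k[0,\alpha]$ and $S_1=\bigcup_{k=0}^{2}\omega^k[-b,-a]$. Let $s_1:S_0\to\mathbb{C}$ satisfy $s_1\ge 0$ on $(0,\alpha)$, $s_1\in L^1(0,\alpha)$, $s_1$ not a.e. zero on $(0,\alpha)$, and $s_1(\omega z)=\omega^2 s_1(z)$ for $z\in S_0\setminus\{0,\alpha,\omega\alpha,\omega^2\alpha\}$. For a function $g$ on $S_0$, $\int_{S_0}g(t)s_1(t)\,dt$ denotes the complex line integral along the three segments oriented from $0$ outward; it equals $\sum_{k=0}^{2}\int_0^\alpha g(\omega^k x)s_1(x)\,dx$. Let $s_2\ge 0$ be integrable on $[-b,-a]$ and not a.e. zero; extend $s_2$ to $S_1$ by $s_2(\omega z)=\omega^2s_2(z)$, and for a function $g$ on $S_1$ let $\int_{S_1}g(t)s_2(t)\,dt$ be the complex line integral along the three segments $\omega^k[-b,-a]$ (parametrized by $t=\omega^k x$, $x$ from $-b$ to $-a$), which equals $\sum_{k=0}^2\int_{-b}^{-a}g(\omega^kx)s_2(x)\,dx$. Put $f(z)=z^2\int_{-b}^{-a}\frac{s_2(t)}{z^3-t^3}\,dt$.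 For $n\ge0$, $Q_n$ denotes the monic polynomial of lowest degree such that $\int_{S_0}Q_{2n}(t)t^ks_1(t)dt=0$ and $\int_{S_0}Q_{2n}(t)t^kf(t)s_1(t)dt=0$ for $0\le k\le n-1$; and $\int_{S_0}Q_{2n+1}(t)t^ks_1(t)dt=0$ for $0\le k\le n$, $\int_{S_0}Q_{2n+1}(t)t^kf(t)s_1(t)dt=0$ for $0\le k\le n-1$. The functions of second type are $\Psi_n(z)=\int_{S_0}\frac{Q_n(t)}{t-z}s_1(t)\,dt$, $z\in\mathbb{C}\setminus S_0$. *)

theory Defs
  imports "HOL-Analysis.Analysis" "HOL-Computational_Algebra.Polynomial"
begin

definition omega :: complex where
  "omega = cis (2 * pi / 3)"

text \<open>Integral over S0 against s1 (s1 given by its values on (0,alpha); extended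
  to S0 by s1(omega z) = omega^2 s1(z)):
  int_{S0} g(t) s1(t) dt = sum_{k=0}^{2} int_0^alpha g(omega^k x) s1(x) dx.\<close>
definition S0_int :: "real \<Rightarrow> (real \<Rightarrow> real) \<Rightarrow> (complex \<Rightarrow> complex) \<Rightarrow> complex" where
  "S0_int \<alpha> s1 g = (\<Sum>k<3::nat. set_lebesgue_integral lborel {0..\<alpha>}
       (\<lambda>x. g (omega ^ k * complex_of_real x) * complex_of_real (s1 x)))"

definition S1_int :: "real \<Rightarrow> real \<Rightarrow> (real \<Rightarrow> real) \<Rightarrow> (complex \<Rightarrow> complex) \<Rightarrow> complex" where
  "S1_int a b s2 g = (\<Sum>k<3::nat. set_lebesgue_integral lborel {-b..-a}
       (\<lambda>x. g (omega ^ k * complex_of_real x) * complex_of_real (s2 x)))"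

definition f_fun :: "real \<Rightarrow> real \<Rightarrow> (real \<Rightarrow> real) \<Rightarrow> complex \<Rightarrow> complex" where
  "f_fun a b s2 z = z ^ 2 * set_lebesgue_integral lborel {-b..-a}
       (\<lambda>t. complex_of_real (s2 t) / (z ^ 3 - complex_of_real t ^ 3))"

definition Q_even_cond :: "real \<Rightarrow> real \<Rightarrow> real \<Rightarrow> (real \<Rightarrow> real) \<Rightarrow> (real \<Rightarrow> real)
    \<Rightarrow> nat \<Rightarrow> complex poly \<Rightarrow> bool" where
  "Q_even_cond \<alpha> a b s1 s2 n q \<longleftrightarrow> lead_coeff q = 1 \<and>
     (\<forall>k<n. S0_int \<alpha> s1 (\<lambda>t. poly q t * t ^ k) = 0) \<and>
     (\<forall>k<n. S0_int \<alpha> s1 (\<lambda>t. poly q t * t ^ k * f_fun a b s2 t) = 0)"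

definition Q_odd_cond :: "real \<Rightarrow> real \<Rightarrow> real \<Rightarrow> (real \<Rightarrow> real) \<Rightarrow> (real \<Rightarrow> real)
    \<Rightarrow> nat \<Rightarrow> complex poly \<Rightarrow> bool" where
  "Q_odd_cond \<alpha> a b s1 s2 n q \<longleftrightarrow> lead_coeff q = 1 \<and>
     (\<forall>k\<le>n. S0_int \<alpha> s1 (\<lambda>t. poly q t * t ^ k) = 0) \<and>
     (\<forall>k<n. S0_int \<alpha> s1 (\<lambda>t. poly q t * t ^ k * f_fun a b s2 t) = 0)"

definition is_Q_even where
  "is_Q_even \<alpha> a b s1 s2 n q \<longleftrightarrow> Q_even_cond \<alpha> a b s1 s2 n q \<and>
     (\<forall>p. Q_even_cond \<alpha> a b s1 s2 n p \<longrightarrow> degree q \<le> degree p)"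

definition is_Q_odd where
  "is_Q_odd \<alpha> a b s1 s2 n q \<longleftrightarrow> Q_odd_cond \<alpha> a b s1 s2 n q \<and>
     (\<forall>p. Q_odd_cond \<alpha> a b s1 s2 n p \<longrightarrow> degree q \<le> degree p)"

definition Psi :: "real \<Rightarrow> (real \<Rightarrow> real) \<Rightarrow> complex poly \<Rightarrow> complex \<Rightarrow> complex" where
  "Psi \<alpha> s1 q z = S0_int \<alpha> s1 (\<lambda>t. poly q t / (t - z))"

end

theory Submission
  imports Defs
begin


lemma omega3: "omega ^ 3 = 1"
  proof -
  have "omega ^ 3 = cis (real 3 * (2 * pi / 3))" unfolding omega_def by (rule Complex.DeMoivre)
  also have "real 3 * (2 * pi / 3) = 2 * pi" by simp
  finally show ?thesis by (simp add: complex_eq_iff)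
qed

lemma omega_ne1: "omega \<noteq> 1"
proof
  assume "omega = 1"
  hence "Re omega = 1" by simp
  thus False unfolding omega_def using cos_120 by simp
qed

lemma omega_sum: "1 + omega + omega^2 = 0"
proof -
  have "(omega - 1) * (1 + omega + omega^2) = omega^3 - 1" by algebra
  also have "\<dots> = 0" by (simp add: omega3)
  finally show ?thesis using omega_ne1 by simp
qed

lemma omegak3: "(omega ^ k) ^ 3 = 1"
  by (metis omega3 power_mult mult.commute power_one)

lemma sum_recip:
  fixes u y :: complex
  assumes "u^3 \<noteq> y^3"
  shows "(\<Sum>j<3::nat. 1 / (u - omega^j * y)) = 3 * u^2 / (u^3 - y^3)"
proof -
  have w: "1 + omega + omega^2 = 0" by (rule omega_sum)
  have fac: "u^3 - y^3 = (u - y) * (u - omega * y) * (u - omega^2 * y)"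
    using w by algebra
  have num: "(u - omega * y) * (u - omega^2 * y) + (u - y) * (u - omega^2 * y) + (u - y) * (u - omega * y) = 3 * u^2"
    using w by algebra
  from assms fac have nz: "u - y \<noteq> 0" "u - omega * y \<noteq> 0" "u - omega^2 * y \<noteq> 0" by auto
  have "(\<Sum>j<3::nat. 1 / (u - omega^j * y)) = 1/(u-y) + 1/(u - omega*y) + 1/(u - omega^2*y)"
    by (simp add: numeral_3_eq_3 lessThan_Suc power2_eq_square add.commute add.left_commute)
  also have "\<dots> = 3 * u^2 / (u^3 - y^3)"
  proof -
    have gen: "\<And>d0 d1 d2::complex. d0 \<noteq> 0 \<Longrightarrow> d1 \<noteq> 0 \<Longrightarrow> d2 \<noteq> 0 \<Longrightarrow>
       1/d0 + 1/d1 + 1/d2 = (d1*d2 + d0*d2 + d0*d1)/(d0*d1*d2)"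
      by (simp add: field_simps)
    show ?thesis unfolding gen[OF nz] num fac ..
  qed
  finally show ?thesis .
qed

lemma psi_int:
  assumes "set_integrable lborel {l<..<r} (s::real\<Rightarrow>real)"
  shows "integrable lborel (\<lambda>x. indicator {l..r} x * s x)"
proof -
  have "integrable lborel (\<lambda>x. indicator {l<..<r} x * s x)"
    using assms unfolding set_integrable_def by simp
  moreover have "integrable lborel (\<lambda>x. indicator {l<..<r} x * s x) \<longleftrightarrow>
      integrable lborel (\<lambda>x. indicator {l..r} x * s x)"
    by (rule integrable_discrete_difference[where X="{l,r}"]) (auto simp: indicator_def)
  ultimately show ?thesis by simp
qed

lemma cont_int:
  fixes h :: "real \<Rightarrow> complex" and s :: "real \<Rightarrow> real"
  assumes i: "integrable lborel (\<lambda>x. indicator A x * s x)" and A: "compact A"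
    and c: "continuous_on A h"
  shows "integrable lborel (\<lambda>x. h x * complex_of_real (indicator A x * s x))"
proof -
  obtain B where B: "\<forall>x\<in>A. norm (h x) \<le> B"
    using compact_imp_bounded[OF compact_continuous_image[OF c A]] unfolding bounded_iff by auto
  have eq: "(\<lambda>x. h x * complex_of_real (indicator A x * s x)) =
      (\<lambda>x. (indicator A x *\<^sub>R h x) * complex_of_real (indicator A x * s x))"
    by (auto simp: indicator_def fun_eq_iff)
  have m: "(\<lambda>x. indicator A x *\<^sub>R h x) \<in> borel_measurable borel"
    by (rule borel_measurable_continuous_on_indicator) (auto intro: borel_compact A c)
  have m2: "(\<lambda>x. indicator A x * s x) \<in> borel_measurable borel"
    using borel_measurable_integrable[OF i] by simp
  show ?thesis
  proof (rule Bochner_Integration.integrable_bound[where f="\<lambda>x. B * (indicator A x * s x)"])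
    show "integrable lborel (\<lambda>x. B * (indicator A x * s x))" using i by simp
    show "(\<lambda>x. h x * complex_of_real (indicator A x * s x)) \<in> borel_measurable lborel"
    proof -
      have m3: "(\<lambda>x. complex_of_real (indicator A x * s x)) \<in> borel_measurable borel"
        using m2 by measurable
      show ?thesis unfolding eq measurable_lborel2 using m m3 by (rule borel_measurable_times)
    qed
    show "AE x in lborel. norm (h x * complex_of_real (indicator A x * s x)) \<le> norm (B * (indicator A x * s x))"
    proof (rule AE_I2)
      fix x show "norm (h x * complex_of_real (indicator A x * s x)) \<le> norm (B * (indicator A x * s x))"
      proof (cases "x \<in> A")
        case True
        then have "cmod (h x) \<le> \<bar>B\<bar>" using B by force
        then have "cmod (h x) * \<bar>s x\<bar> \<le> \<bar>B\<bar> * \<bar>s x\<bar>" by (rule mult_right_mono) simp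
        then show ?thesis using True by (simp add: norm_mult abs_mult)
      qed simp
    qed
  qed
qed

lemma fub:
  fixes H :: "real \<Rightarrow> real \<Rightarrow> complex" and s1 s2 :: "real \<Rightarrow> real"
  assumes i1: "integrable lborel (\<lambda>x. indicator A x * s1 x)"
    and i2: "integrable lborel (\<lambda>y. indicator B y * s2 y)"
    and A: "compact A" and B: "compact B"
    and c: "continuous_on (A \<times> B) (\<lambda>p. H (fst p) (snd p))"
  shows "integrable lborel (\<lambda>y. (\<integral>x. H x y * complex_of_real (indicator A x * s1 x) \<partial>lborel)
              * complex_of_real (indicator B y * s2 y))"
    and "integrable lborel (\<lambda>x. (\<integral>y. H x y * complex_of_real (indicator B y * s2 y) \<partial>lborel)
              * complex_of_real (indicator A x * s1 x))"
    and "(\<integral>y. (\<integral>x. H x y * complex_of_real (indicator A x * s1 x) \<partial>lborel)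
              * complex_of_real (indicator B y * s2 y) \<partial>lborel) =
         (\<integral>x. (\<integral>y. H x y * complex_of_real (indicator B y * s2 y) \<partial>lborel)
              * complex_of_real (indicator A x * s1 x) \<partial>lborel)"
proof -
  define p1 where "p1 = (\<lambda>x. indicator A x * s1 x)"
  define p2 where "p2 = (\<lambda>y. indicator B y * s2 y)"
  have m1[measurable]: "p1 \<in> borel_measurable lborel"
    using borel_measurable_integrable[OF i1] unfolding p1_def .
  have m2[measurable]: "p2 \<in> borel_measurable lborel"
    using borel_measurable_integrable[OF i2] unfolding p2_def .
  define F where "F = (\<lambda>x y. H x y * complex_of_real (p1 x) * complex_of_real (p2 y))"
  obtain C where C: "\<forall>p\<in>A \<times> B. norm (H (fst p) (snd p)) \<le> C"
    using compact_imp_bounded[OF compact_continuous_image[OF c compact_Times[OF A B]]]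
    unfolding bounded_iff by auto
  have G: "integrable (lborel \<Otimes>\<^sub>M lborel) (\<lambda>p. \<bar>p1 (fst p)\<bar> * \<bar>p2 (snd p)\<bar>)"
  proof (rule lborel_pair.Fubini_integrable)
    show "(\<lambda>p. \<bar>p1 (fst p)\<bar> * \<bar>p2 (snd p)\<bar>) \<in> borel_measurable (lborel \<Otimes>\<^sub>M lborel)"
      by measurable
    have "integrable lborel (\<lambda>x. \<bar>p1 x\<bar> * (\<integral>y. \<bar>p2 y\<bar> \<partial>lborel))"
      using i1 unfolding p1_def by (intro integrable_mult_left integrable_abs) 
    then show "integrable lborel (\<lambda>x. \<integral>y. norm (\<bar>p1 (fst (x, y))\<bar> * \<bar>p2 (snd (x, y))\<bar>) \<partial>lborel)"
      by (simp add: abs_mult)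
    show "AE x in lborel. integrable lborel (\<lambda>y. \<bar>p1 (fst (x, y))\<bar> * \<bar>p2 (snd (x, y))\<bar>)"
      using i2 unfolding p2_def by (intro AE_I2) (simp add: integrable_mult_right integrable_abs)
  qed
  have mH: "(\<lambda>p. indicator (A \<times> B) p *\<^sub>R H (fst p) (snd p)) \<in> borel_measurable (lborel \<Otimes>\<^sub>M lborel)"
  proof -
    have "(\<lambda>p. indicator (A \<times> B) p *\<^sub>R H (fst p) (snd p)) \<in> borel_measurable (borel :: (real \<times> real) measure)"
      by (rule borel_measurable_continuous_on_indicator) (auto intro: borel_compact compact_Times A B c)
    then show ?thesis by (subst lborel_prod) simp
  qed
  have intF: "integrable (lborel \<Otimes>\<^sub>M lborel) (case_prod F)"
  proof (rule Bochner_Integration.integrable_bound[OF integrable_mult_right[OF G, of C]])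
    have eq: "case_prod F = (\<lambda>p. (indicator (A \<times> B) p *\<^sub>R H (fst p) (snd p)) * complex_of_real (p1 (fst p)) * complex_of_real (p2 (snd p)))"
      by (auto simp: F_def p1_def p2_def fun_eq_iff indicator_def)
    show "case_prod F \<in> borel_measurable (lborel \<Otimes>\<^sub>M lborel)"
      unfolding eq using mH by measurable
    show "AE x in lborel \<Otimes>\<^sub>M lborel. norm (case_prod F x) \<le> norm (C * (\<bar>p1 (fst x)\<bar> * \<bar>p2 (snd x)\<bar>))"
    proof (rule AE_I2)
      fix p :: "real \<times> real"
      show "norm (case_prod F p) \<le> norm (C * (\<bar>p1 (fst p)\<bar> * \<bar>p2 (snd p)\<bar>))"
      proof (cases "p \<in> A \<times> B")
        case True
        then have "norm (H (fst p) (snd p)) \<le> C" using C by auto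
        moreover have "0 \<le> \<bar>p1 (fst p)\<bar> * \<bar>p2 (snd p)\<bar>" by simp
        ultimately have "norm (H (fst p) (snd p)) * (\<bar>p1 (fst p)\<bar> * \<bar>p2 (snd p)\<bar>) \<le> C * (\<bar>p1 (fst p)\<bar> * \<bar>p2 (snd p)\<bar>)"
          by (rule mult_right_mono)
        then show ?thesis
          by (cases p) (simp add: F_def norm_mult mult.assoc)
      next
        case False
        then show ?thesis by (cases p) (auto simp: F_def p1_def p2_def indicator_def)
      qed
    qed
  qed
  have e1: "\<And>y. (\<integral>x. F x y \<partial>lborel) = (\<integral>x. H x y * complex_of_real (p1 x) \<partial>lborel) * complex_of_real (p2 y)"
    unfolding F_def by simp
  have e2: "\<And>x. (\<integral>y. F x y \<partial>lborel) = (\<integral>y. H x y * complex_of_real (p2 y) \<partial>lborel) * complex_of_real (p1 x)"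
  proof -
    fix x
    have "(\<lambda>y. F x y) = (\<lambda>y. H x y * complex_of_real (p2 y) * complex_of_real (p1 x))"
      unfolding F_def by (auto simp: fun_eq_iff mult_ac)
    then show "(\<integral>y. F x y \<partial>lborel) = (\<integral>y. H x y * complex_of_real (p2 y) \<partial>lborel) * complex_of_real (p1 x)"
      by simp
  qed
  show "integrable lborel (\<lambda>y. (\<integral>x. H x y * complex_of_real (indicator A x * s1 x) \<partial>lborel)
              * complex_of_real (indicator B y * s2 y))"
    using lborel_pair.integrable_snd[OF intF] unfolding e1 p1_def p2_def .
  show "integrable lborel (\<lambda>x. (\<integral>y. H x y * complex_of_real (indicator B y * s2 y) \<partial>lborel)
              * complex_of_real (indicator A x * s1 x))"
    using lborel_pair.integrable_fst[OF intF] unfolding e2 p1_def p2_def .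
  show "(\<integral>y. (\<integral>x. H x y * complex_of_real (indicator A x * s1 x) \<partial>lborel)
              * complex_of_real (indicator B y * s2 y) \<partial>lborel) =
         (\<integral>x. (\<integral>y. H x y * complex_of_real (indicator B y * s2 y) \<partial>lborel)
              * complex_of_real (indicator A x * s1 x) \<partial>lborel)"
    using lborel_pair.Fubini_integral[OF intF] unfolding e1 e2 p1_def p2_def .
qed


lemma cube_of_real: "(omega ^ k * complex_of_real x) ^ 3 = complex_of_real (x ^ 3)"
  by (simp add: power_mult_distrib omegak3)

lemma geom:
  fixes x y :: real assumes "0 \<le> x" "y < 0"
  shows "omega^k * complex_of_real x - omega^j * complex_of_real y \<noteq> 0"
    and "(omega^k * complex_of_real x)^3 - complex_of_real y ^ 3 \<noteq> 0"
proof -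
  have xy: "x^3 \<noteq> y^3"
  proof -
    have "0 \<le> x^3" using assms by simp
    moreover have "y^3 < 0" using assms by (simp add: power_less_zero_eq)
    ultimately show ?thesis by linarith
  qed
  show "(omega^k * complex_of_real x)^3 - complex_of_real y ^ 3 \<noteq> 0"
    using xy unfolding cube_of_real by (metis eq_iff_diff_eq_0 of_real_eq_iff of_real_power)
  show "omega^k * complex_of_real x - omega^j * complex_of_real y \<noteq> 0"
  proof
    assume "omega^k * complex_of_real x - omega^j * complex_of_real y = 0"
    then have "(omega^k * complex_of_real x)^3 = (omega^j * complex_of_real y)^3" by simp
    then show False using xy unfolding cube_of_real by (metis of_real_eq_iff)
  qed
qed

lemma alg_split:
  fixes q u t :: complex
  assumes "u \<noteq> t"
  shows "t^\<nu> * (q / (u - t)) = q * u^\<nu> / (u - t) - (\<Sum>i<\<nu>. t^(\<nu> - Suc i) * (q * u^i))"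
proof -
  have "q * u^\<nu> / (u - t) - t^\<nu> * (q / (u - t)) = q * (u^\<nu> - t^\<nu>) / (u - t)"
    by (simp add: diff_divide_distrib right_diff_distrib mult_ac)
  also have "\<dots> = q * (\<Sum>i<\<nu>. t^(\<nu> - Suc i) * u^i)"
    unfolding power_diff_sumr2 using assms by simp
  also have "\<dots> = (\<Sum>i<\<nu>. t^(\<nu> - Suc i) * (q * u^i))"
    by (simp add: sum_distrib_left mult_ac)
  finally show ?thesis by (simp add: algebra_simps)
qed


lemma aux_mult:
  fixes t q d c R :: complex
  assumes "t * (q / d) = R - (\<Sum>i\<in>I. g i * h i)"
  shows "t * (q / d * c) = R * c - (\<Sum>i\<in>I. g i * (h i * c))"
proof -
  have "t * (q / d * c) = (t * (q / d)) * c" by (simp add: mult.assoc)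
  also have "\<dots> = R * c - (\<Sum>i\<in>I. g i * h i * c)"
    unfolding assms by (simp add: left_diff_distrib sum_distrib_right)
  finally show ?thesis by (simp add: mult.assoc)
qed

lemma main:
  fixes Q :: "complex poly" and s1 s2 :: "real \<Rightarrow> real"
  assumes a: "0 < a"
    and i1: "integrable lborel (\<lambda>x. indicator {0..\<alpha>} x * s1 x)"
    and i2: "integrable lborel (\<lambda>y. indicator {-b..-a} y * s2 y)"
    and h1: "\<forall>i<\<nu>. S0_int \<alpha> s1 (\<lambda>t. poly Q t * t^i) = 0"
    and h2: "S0_int \<alpha> s1 (\<lambda>t. poly Q t * t^\<nu> * f_fun a b s2 t) = 0"
  shows "S1_int a b s2 (\<lambda>t. t^\<nu> * Psi \<alpha> s1 Q t) = 0"
proof -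
  define A where "A = {0..\<alpha>}"
  define B where "B = {-b..-a}"
  define p1 where "p1 = (\<lambda>x. indicator A x * s1 x)"
  define p2 where "p2 = (\<lambda>y. indicator B y * s2 y)"
  have cA: "compact A" and cB: "compact B" unfolding A_def B_def by auto
  have i1': "integrable lborel (\<lambda>x. indicator A x * s1 x)" using i1 unfolding A_def .
  have i2': "integrable lborel (\<lambda>y. indicator B y * s2 y)" using i2 unfolding B_def .
  have S0eq: "\<And>g. S0_int \<alpha> s1 g = (\<Sum>k<3. \<integral>x. g (omega^k * complex_of_real x) * complex_of_real (p1 x) \<partial>lborel)"
    unfolding S0_int_def set_lebesgue_integral_def p1_def A_def
    apply (rule sum.cong[OF refl]) apply (rule Bochner_Integration.integral_cong[OF refl]) by (auto simp: indicator_def)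
  have S1eq: "\<And>g. S1_int a b s2 g = (\<Sum>j<3. \<integral>y. g (omega^j * complex_of_real y) * complex_of_real (p2 y) \<partial>lborel)"
    unfolding S1_int_def set_lebesgue_integral_def p2_def B_def
    apply (rule sum.cong[OF refl]) apply (rule Bochner_Integration.integral_cong[OF refl]) by (auto simp: indicator_def)
  have feq: "\<And>z. f_fun a b s2 z = z^2 * (\<integral>y. complex_of_real (p2 y) / (z^3 - complex_of_real y ^ 3) \<partial>lborel)"
    unfolding f_fun_def set_lebesgue_integral_def p2_def B_def
    apply (rule arg_cong2[where f="(*)", OF refl]) apply (rule Bochner_Integration.integral_cong[OF refl]) by (auto simp: indicator_def)
  have xA: "\<And>x. x \<in> A \<Longrightarrow> 0 \<le> x" unfolding A_def by auto
  have yB: "\<And>y. y \<in> B \<Longrightarrow> y < 0" unfolding B_def using a by auto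
  have nz: "\<And>x y k j. x \<in> A \<Longrightarrow> y \<in> B \<Longrightarrow> omega^k * complex_of_real x - omega^j * complex_of_real y \<noteq> 0"
    using geom(1) xA yB by blast
  have nz3: "\<And>x y k. x \<in> A \<Longrightarrow> y \<in> B \<Longrightarrow> (omega^k * complex_of_real x)^3 - complex_of_real y ^ 3 \<noteq> 0"
    using geom(2) xA yB by blast
  define H where "H = (\<lambda>k j x y. poly Q (omega^k * complex_of_real x) * (omega^k * complex_of_real x)^\<nu>
      / (omega^k * complex_of_real x - omega^(j::nat) * complex_of_real y))"
  have stepa: "(omega^j * complex_of_real y)^\<nu> * Psi \<alpha> s1 Q (omega^j * complex_of_real y) =
      (\<Sum>k<3. \<integral>x. H k j x y * complex_of_real (p1 x) \<partial>lborel)" if y: "y \<in> B" for j y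
  proof -
    define t where "t = omega^j * complex_of_real y"
    have ne: "\<And>k x. x \<in> A \<Longrightarrow> omega^k * complex_of_real x \<noteq> t"
      using nz[OF _ y] unfolding t_def by (metis eq_iff_diff_eq_0)
    have int1: "integrable lborel (\<lambda>x. poly Q (omega^k * complex_of_real x) / (omega^k * complex_of_real x - t) * complex_of_real (p1 x))" for k
      unfolding p1_def
      by (rule cont_int[OF i1' cA]) (auto intro!: continuous_intros dest: ne)
    have int2: "integrable lborel (\<lambda>x. H k j x y * complex_of_real (p1 x))" for k
      unfolding p1_def H_def t_def[symmetric]
      by (rule cont_int[OF i1' cA]) (auto intro!: continuous_intros dest: ne)
    have int3: "integrable lborel (\<lambda>x. poly Q (omega^k * complex_of_real x) * (omega^k * complex_of_real x)^i * complex_of_real (p1 x))" for k i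
      unfolding p1_def
      by (rule cont_int[OF i1' cA]) (auto intro!: continuous_intros)
    have e1: "t^\<nu> * (poly Q (omega^k * complex_of_real x) / (omega^k * complex_of_real x - t) * complex_of_real (p1 x))
      = H k j x y * complex_of_real (p1 x) -
        (\<Sum>i<\<nu>. t^(\<nu> - Suc i) * (poly Q (omega^k * complex_of_real x) * (omega^k * complex_of_real x)^i * complex_of_real (p1 x)))" for k x
    proof (cases "x \<in> A")
      case True
      have "t^\<nu> * (poly Q (omega^k * complex_of_real x) / (omega^k * complex_of_real x - t)) =
         poly Q (omega^k * complex_of_real x) * (omega^k * complex_of_real x)^\<nu> / (omega^k * complex_of_real x - t) -
         (\<Sum>i<\<nu>. t^(\<nu> - Suc i) * (poly Q (omega^k * complex_of_real x) * (omega^k * complex_of_real x)^i))"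
        by (rule alg_split) (use ne[OF True] in auto)
      then show ?thesis unfolding H_def t_def[symmetric]
        by (rule aux_mult)
    next
      case False
      then show ?thesis by (simp add: p1_def)
    qed
    have "t^\<nu> * Psi \<alpha> s1 Q t = (\<Sum>k<3. \<integral>x. t^\<nu> * (poly Q (omega^k * complex_of_real x) / (omega^k * complex_of_real x - t) * complex_of_real (p1 x)) \<partial>lborel)"
      unfolding Psi_def S0eq sum_distrib_left by (simp only: integral_mult_right_zero)
    also have "\<dots> = (\<Sum>k<3. (\<integral>x. H k j x y * complex_of_real (p1 x) \<partial>lborel) -
         (\<Sum>i<\<nu>. t^(\<nu> - Suc i) * (\<integral>x. poly Q (omega^k * complex_of_real x) * (omega^k * complex_of_real x)^i * complex_of_real (p1 x) \<partial>lborel)))"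
      unfolding e1 using int2 int3 by (simp add: integral_diff integral_sum)
    also have "\<dots> = (\<Sum>k<3. \<integral>x. H k j x y * complex_of_real (p1 x) \<partial>lborel) -
         (\<Sum>i<\<nu>. t^(\<nu> - Suc i) * S0_int \<alpha> s1 (\<lambda>t. poly Q t * t^i))"
      unfolding S0eq sum_subtractf sum_distrib_left
      by (subst sum.swap) (simp add: mult.assoc)
    also have "\<dots> = (\<Sum>k<3. \<integral>x. H k j x y * complex_of_real (p1 x) \<partial>lborel)"
      using h1 by simp
    finally show ?thesis unfolding t_def .
  qed
  have contH: "continuous_on (A \<times> B) (\<lambda>p. H k j (fst p) (snd p))" for k j
    unfolding H_def by (auto intro!: continuous_intros dest: nz)
  note F1 = fub(1)[OF i1' i2' cA cB contH]
  note F2 = fub(2)[OF i1' i2' cA cB contH]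
  note F3 = fub(3)[OF i1' i2' cA cB contH]
  have px: "(\<Sum>j<3. \<integral>y. H k j x y * complex_of_real (p2 y) \<partial>lborel) =
      3 * (poly Q (omega^k * complex_of_real x) * (omega^k * complex_of_real x)^\<nu> * f_fun a b s2 (omega^k * complex_of_real x))"
    if x: "x \<in> A" for k x
  proof -
    define u where "u = omega^k * complex_of_real x"
    define P where "P = poly Q u * u^\<nu>"
    have intj: "integrable lborel (\<lambda>y. H k j x y * complex_of_real (p2 y))" for j
      unfolding p2_def H_def
      by (rule cont_int[OF i2' cB]) (auto intro!: continuous_intros dest: nz[OF x])
    have pe: "(\<Sum>j<3. H k j x y * complex_of_real (p2 y)) =
       (3 * P * u^2) * (complex_of_real (p2 y) / (u^3 - complex_of_real y ^ 3))" for y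
    proof (cases "y \<in> B")
      case True
      have "(\<Sum>j<3. H k j x y) = P * (\<Sum>j<3::nat. 1 / (u - omega^j * complex_of_real y))"
        unfolding H_def P_def u_def sum_distrib_left by simp
      also have "\<dots> = P * (3 * u^2 / (u^3 - complex_of_real y ^ 3))"
        using sum_recip nz3[OF x True] unfolding u_def by (metis eq_iff_diff_eq_0)
      finally show ?thesis by (simp add: sum_distrib_right[symmetric])
    next
      case False
      then show ?thesis by (simp add: p2_def)
    qed
    have "(\<Sum>j<3. \<integral>y. H k j x y * complex_of_real (p2 y) \<partial>lborel) =
       (\<integral>y. (\<Sum>j<3. H k j x y * complex_of_real (p2 y)) \<partial>lborel)"
      using intj by (simp add: integral_sum)
    also have "\<dots> = (3 * P * u^2) * (\<integral>y. complex_of_real (p2 y) / (u^3 - complex_of_real y ^ 3) \<partial>lborel)"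
      unfolding pe by (simp only: integral_mult_right_zero)
    also have "\<dots> = 3 * (P * f_fun a b s2 u)" unfolding feq by simp
    finally show ?thesis unfolding P_def u_def .
  qed
  have "S1_int a b s2 (\<lambda>t. t^\<nu> * Psi \<alpha> s1 Q t) =
     (\<Sum>j<3. \<integral>y. (\<Sum>k<3. (\<integral>x. H k j x y * complex_of_real (p1 x) \<partial>lborel) * complex_of_real (p2 y)) \<partial>lborel)"
    unfolding S1eq
  proof (rule sum.cong[OF refl], rule Bochner_Integration.integral_cong[OF refl])
    fix j y
    show "(omega ^ j * complex_of_real y) ^ \<nu> * Psi \<alpha> s1 Q (omega ^ j * complex_of_real y) * complex_of_real (p2 y) =
          (\<Sum>k<3. (\<integral>x. H k j x y * complex_of_real (p1 x) \<partial>lborel) * complex_of_real (p2 y))"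
      by (cases "y \<in> B") (simp_all add: stepa sum_distrib_right p2_def)
  qed
  also have "\<dots> = (\<Sum>j<3. \<Sum>k<3. \<integral>y. (\<integral>x. H k j x y * complex_of_real (p1 x) \<partial>lborel) * complex_of_real (p2 y) \<partial>lborel)"
    using F1 unfolding p1_def p2_def by (simp add: integral_sum)
  also have "\<dots> = (\<Sum>j<3. \<Sum>k<3. \<integral>x. (\<integral>y. H k j x y * complex_of_real (p2 y) \<partial>lborel) * complex_of_real (p1 x) \<partial>lborel)"
    unfolding p1_def p2_def F3 ..
  also have "\<dots> = (\<Sum>k<3. \<integral>x. (\<Sum>j<3. (\<integral>y. H k j x y * complex_of_real (p2 y) \<partial>lborel) * complex_of_real (p1 x)) \<partial>lborel)"
    using F2 unfolding p1_def p2_def by (subst sum.swap) (simp add: integral_sum)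
  also have "\<dots> = (\<Sum>k<3. \<integral>x. 3 * (poly Q (omega^k * complex_of_real x) * (omega^k * complex_of_real x)^\<nu> * f_fun a b s2 (omega^k * complex_of_real x)) * complex_of_real (p1 x) \<partial>lborel)"
  proof (rule sum.cong[OF refl], rule Bochner_Integration.integral_cong[OF refl])
    fix k x
    show "(\<Sum>j<3. (\<integral>y. H k j x y * complex_of_real (p2 y) \<partial>lborel) * complex_of_real (p1 x)) =
       3 * (poly Q (omega^k * complex_of_real x) * (omega^k * complex_of_real x)^\<nu> * f_fun a b s2 (omega^k * complex_of_real x)) * complex_of_real (p1 x)"
      by (cases "x \<in> A") (simp_all add: px sum_distrib_right[symmetric] p1_def)
  qed
  also have "\<dots> = 3 * S0_int \<alpha> s1 (\<lambda>t. poly Q t * t^\<nu> * f_fun a b s2 t)"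
    unfolding S0eq sum_distrib_left by (simp add: mult.assoc)
  also have "\<dots> = 0" using h2 by simp
  finally show ?thesis .
qed

theorem proposition2p1:
  fixes \<alpha> a b :: real and s1 s2 :: "real \<Rightarrow> real" and n \<nu> :: nat
    and Q0 Q1 :: "complex poly"
  assumes "0 < \<alpha>" and "0 < a" and "a < b"
    and "\<forall>x\<in>{0<..<\<alpha>}. s1 x \<ge> 0"
    and "set_integrable lborel {0<..<\<alpha>} s1"
    and "\<not> (AE x in lborel. x \<in> {0<..<\<alpha>} \<longrightarrow> s1 x = 0)"
    and "\<forall>x\<in>{-b..-a}. s2 x \<ge> 0"
    and "set_integrable lborel {-b..-a} s2"
    and "\<not> (AE x in lborel. x \<in> {-b..-a} \<longrightarrow> s2 x = 0)"
    and "is_Q_even \<alpha> a b s1 s2 n Q0"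
    and "is_Q_odd \<alpha> a b s1 s2 n Q1"
    and "1 \<le> n" and "\<nu> < n"
  shows "S1_int a b s2 (\<lambda>t. t ^ \<nu> * Psi \<alpha> s1 Q0 t) = 0
       \<and> S1_int a b s2 (\<lambda>t. t ^ \<nu> * Psi \<alpha> s1 Q1 t) = 0"
proof -
  have i1: "integrable lborel (\<lambda>x. indicator {0..\<alpha>} x * s1 x)"
    by (rule psi_int) (rule assms(5))
  have i2: "integrable lborel (\<lambda>y. indicator {-b..-a} y * s2 y)"
    using assms(8) unfolding set_integrable_def by simp
  have e: "Q_even_cond \<alpha> a b s1 s2 n Q0" using assms(10) unfolding is_Q_even_def by blast
  have o: "Q_odd_cond \<alpha> a b s1 s2 n Q1" using assms(11) unfolding is_Q_odd_def by blast
  show ?thesis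
  proof
    show "S1_int a b s2 (\<lambda>t. t ^ \<nu> * Psi \<alpha> s1 Q0 t) = 0"
      by (rule main[OF assms(2) i1 i2]) (use e assms(13) in \<open>auto simp: Q_even_cond_def\<close>)
    show "S1_int a b s2 (\<lambda>t. t ^ \<nu> * Psi \<alpha> s1 Q1 t) = 0"
      by (rule main[OF assms(2) i1 i2]) (use o assms(13) in \<open>auto simp: Q_odd_cond_def\<close>)
  qed
qed

end
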